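(* There exists a bipartite Bell-type linear inequality that is unstable under composition if and only if there exist two bipartite closed sets of correlations $\mathcal{S}_1,\mathcal{S}_2$ with non-trivial intersection, i.e. with $\mathcal{S}_1\cap\mathcal{S}_2\neq\mathcal{S}_1$ and $\mathcal{S}_1\cap\mathcal{S}_2\neq\mathcal{S}_2$.
   Context: A bipartite Bell scenario is given by finite input alphabets $\mathcal{X},\mathcal{Y}$ (for Alice and Bob) and finite output alphabets $\mathcal{A},\mathcal{B}$. A box (pair of boxes) in this scenario is a conditional probability distribution $P(a,b|x,y)$, $a\in\mathcal{A},b\in\mathcal{B},x\in\mathcal{X},y\in\mathcal{Y}$. A box is no-signalling if $\sum_a P(a,b|x,y)$ does not depend on $x$ and $\sum_b P(a,b|x,y)$ does not depend on $y$. Wirings: given $n$ boxes $P_1,\dots,P_n$ (each in some bipartite Bell scenario), each shared between Alice (who holds the first side of each) and Bob (who holds the second side), and given a target scenario $(\mathcal{X}',\mathcal{Y}',\mathcal{A}',\mathcal{B}')$, a (deterministic) wiring $\mathcal{W}_A$ for Alice is a procedure that, on effective input $x'\in\mathcal{X}'$, sequentially chooses a not-yet-used box $i$ and an input for Alice's side of box $i$, receives the corresponding output, where the choice of the next box and input is a function of $x'$ and of all previous boxes, inputs and outputs; finally it produces an effective output $a'\in\mathcal{A}'$ as a function of $x'$ and the whole history. Bob's wiring $\mathcal{W}_B$ is defined analogously. Since the boxes are used independently, this yields a well-defined new box $\mathcal{W}_A\otimes\mathcal{W}_B(\otimes_{i=1}^n P_i)(a',b'|x',y')$ in the target scenario.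 A (physically) closed set of bipartite correlations $\mathcal{S}$ is a collection of sets of boxes, one for each bipartite Bell scenario, such that: (1) each such set is convex; (2) $\mathcal{S}$ is symmetric under exchanging Alice and Bob; (3) for any finite collection of boxes $P_1,\dots,P_n$ in $\mathcal{S}$ and any pair of wirings $\mathcal{W}_A,\mathcal{W}_B$, the box $\mathcal{W}_A\otimes\mathcal{W}_B(\otimes_{i=1}^nP_i)$ belongs to $\mathcal{S}$. All closed sets considered are assumed to be topologically closed as well. For closed sets $\mathcal{S}_1,\mathcal{S}_2$, $\mathcal{S}_1\cap\mathcal{S}_2$ is taken scenario-wise, and $\mathcal{S}_1+\mathcal{S}_2$ denotes the smallest closed set containing $\mathcal{S}_1\cup\mathcal{S}_2$. A bipartite Bell-type linear inequality is an inequality $B(P)=\sum_{a,b,x,y}B(a,b|x,y)P(a,b|x,y)\le K_B$ on boxes of a fixed Bell scenario, with real coefficients $B(a,b|x,y)$ and real $K_B$. A closed set is compatible with it if every box of $\mathcal{S}$ in that scenario satisfies it. The inequality is stable under composition if for every pair of closed sets $\mathcal{S}_1,\mathcal{S}_2$ compatible with it, $\mathcal{S}_1+\mathcal{S}_2$ is also compatible with it; otherwise it is unstable under composition. *)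

theory Defs
  imports Complex_Main "HOL-Library.FuncSet"
begin

text \<open>A bipartite Bell scenario: sizes of Alice's input alphabet, Bob's input alphabet,
  Alice's output alphabet, Bob's output alphabet. Alphabets are {0..<n}.\<close>
datatype scenario = Scen (nX: nat) (nY: nat) (nA: nat) (nB: nat)

definition valid_scenario :: "scenario \<Rightarrow> bool" where
  "valid_scenario s \<longleftrightarrow> 0 < nX s \<and> 0 < nY s \<and> 0 < nA s \<and> 0 < nB s"

text \<open>A box P a b x y = P(a,b|x,y); canonically zero outside the alphabets.\<close>
type_synonym box = "nat \<Rightarrow> nat \<Rightarrow> nat \<Rightarrow> nat \<Rightarrow> real"

definition is_box :: "scenario \<Rightarrow> box \<Rightarrow> bool" where
  "is_box s P \<longleftrightarrow> valid_scenario s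
     \<and> (\<forall>a b x y. 0 \<le> P a b x y)
     \<and> (\<forall>a b x y. \<not> (a < nA s \<and> b < nB s \<and> x < nX s \<and> y < nY s) \<longrightarrow> P a b x y = 0)
     \<and> (\<forall>x<nX s. \<forall>y<nY s. (\<Sum>a<nA s. \<Sum>b<nB s. P a b x y) = 1)"

definition no_signalling :: "scenario \<Rightarrow> box \<Rightarrow> bool" where
  "no_signalling s P \<longleftrightarrow> is_box s P
     \<and> (\<forall>a<nA s. \<forall>x<nX s. \<forall>y<nY s. \<forall>y'<nY s.
           (\<Sum>b<nB s. P a b x y) = (\<Sum>b<nB s. P a b x y'))
     \<and> (\<forall>b<nB s. \<forall>y<nY s. \<forall>x<nX s. \<forall>x'<nX s.
           (\<Sum>a<nA s. P a b x y) = (\<Sum>a<nA s. P a b x' y))"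

text \<open>A history is a list of (box index, input, output).
  Given the effective input and the history so far, a wiring either queries
  box i with input u, or stops with an effective output r.\<close>
datatype wstep = Query nat nat | Output nat

type_synonym history = "(nat \<times> nat \<times> nat) list"
type_synonym wiring = "nat \<Rightarrow> history \<Rightarrow> wstep"

text \<open>Run of a wiring on effective input x, when box i would answer outs i (each
  box is used at most once, so one output per box suffices).\<close>
fun walk :: "wiring \<Rightarrow> nat \<Rightarrow> (nat \<Rightarrow> nat) \<Rightarrow> nat \<Rightarrow> history \<Rightarrow> history" where
  "walk W x outs 0 h = h"
| "walk W x outs (Suc k) h =
     (case W x h of Query i u \<Rightarrow> walk W x outs k (h @ [(i, u, outs i)]) | Output r \<Rightarrow> h)"

definition valid_history :: "nat \<Rightarrow> (nat \<Rightarrow> nat) \<Rightarrow> (nat \<Rightarrow> nat) \<Rightarrow> history \<Rightarrow> bool" where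
  "valid_history n inp outp h \<longleftrightarrow> distinct (map fst h)
     \<and> (\<forall>(i, u, r) \<in> set h. i < n \<and> u < inp i \<and> r < outp i)"

definition wf_wiring :: "nat \<Rightarrow> (nat \<Rightarrow> nat) \<Rightarrow> (nat \<Rightarrow> nat) \<Rightarrow> nat \<Rightarrow> nat \<Rightarrow> wiring \<Rightarrow> bool" where
  "wf_wiring n inp outp nin nout W \<longleftrightarrow>
     (\<forall>x<nin. \<forall>h. valid_history n inp outp h \<longrightarrow>
        (case W x h of Query i u \<Rightarrow> i < n \<and> i \<notin> fst ` set h \<and> u < inp i
                     | Output r \<Rightarrow> r < nout))"

text \<open>Input actually fed into box i (0 if the box is never used on this side).\<close>
definition wiring_inputs :: "wiring \<Rightarrow> nat \<Rightarrow> nat \<Rightarrow> (nat \<Rightarrow> nat) \<Rightarrow> nat \<Rightarrow> nat" where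
  "wiring_inputs W n x outs i =
     (case map_of (map (\<lambda>(j, u, r). (j, u)) (walk W x outs n [])) i of Some u \<Rightarrow> u | None \<Rightarrow> 0)"

definition wiring_output :: "wiring \<Rightarrow> nat \<Rightarrow> nat \<Rightarrow> (nat \<Rightarrow> nat) \<Rightarrow> nat" where
  "wiring_output W n x outs =
     (case W x (walk W x outs n []) of Output r \<Rightarrow> r | Query i u \<Rightarrow> 0)"

text \<open>The box W_A \<otimes> W_B (\<otimes>_{i<n} P_i) in target scenario t (boxes P_i in scenario ss i).\<close>
definition compose :: "nat \<Rightarrow> (nat \<Rightarrow> scenario) \<Rightarrow> (nat \<Rightarrow> box) \<Rightarrow> scenario \<Rightarrow> wiring \<Rightarrow> wiring \<Rightarrow> box" where
  "compose n ss Ps t WA WB = (\<lambda>a' b' x' y'.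
     if a' < nA t \<and> b' < nB t \<and> x' < nX t \<and> y' < nY t then
       (\<Sum>oa \<in> PiE {..<n} (\<lambda>i. {..<nA (ss i)}). \<Sum>ob \<in> PiE {..<n} (\<lambda>i. {..<nB (ss i)}).
          if wiring_output WA n x' oa = a' \<and> wiring_output WB n y' ob = b'
          then (\<Prod>i<n. Ps i (oa i) (ob i) (wiring_inputs WA n x' oa i) (wiring_inputs WB n y' ob i))
          else 0)
     else 0)"

type_synonym corr_set = "scenario \<Rightarrow> box set"

definition closed_corr_set :: "corr_set \<Rightarrow> bool" where
  "closed_corr_set S \<longleftrightarrow>
     (\<forall>s. S s \<subseteq> {P. no_signalling s P})
   \<and> (\<forall>s. \<forall>P\<in>S s. \<forall>Q\<in>S s. \<forall>c::real. 0 \<le> c \<and> c \<le> 1 \<longrightarrow>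
          (\<lambda>a b x y. c * P a b x y + (1 - c) * Q a b x y) \<in> S s)
   \<and> (\<forall>s. \<forall>P\<in>S s. (\<lambda>a b x y. P b a y x) \<in> S (Scen (nY s) (nX s) (nB s) (nA s)))
   \<and> (\<forall>n ss Ps t WA WB. valid_scenario t \<and> (\<forall>i<n. Ps i \<in> S (ss i))
          \<and> wf_wiring n (\<lambda>i. nX (ss i)) (\<lambda>i. nA (ss i)) (nX t) (nA t) WA
          \<and> wf_wiring n (\<lambda>i. nY (ss i)) (\<lambda>i. nB (ss i)) (nY t) (nB t) WB
          \<longrightarrow> compose n ss Ps t WA WB \<in> S t)
   \<and> (\<forall>s f P. (\<forall>k. f k \<in> S s) \<and> (\<forall>a b x y. (\<lambda>k. f k a b x y) \<longlonglongrightarrow> P a b x y)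
          \<longrightarrow> P \<in> S s)"

definition inter_corr :: "corr_set \<Rightarrow> corr_set \<Rightarrow> corr_set" where
  "inter_corr S1 S2 = (\<lambda>s. S1 s \<inter> S2 s)"

definition plus_corr :: "corr_set \<Rightarrow> corr_set \<Rightarrow> corr_set" where
  "plus_corr S1 S2 = (\<lambda>s. \<Inter> {T s | T. closed_corr_set T \<and> (\<forall>s'. S1 s' \<union> S2 s' \<subseteq> T s')})"

definition bell_value :: "scenario \<Rightarrow> box \<Rightarrow> box \<Rightarrow> real" where
  "bell_value s B P = (\<Sum>a<nA s. \<Sum>b<nB s. \<Sum>x<nX s. \<Sum>y<nY s. B a b x y * P a b x y)"

definition compatible :: "corr_set \<Rightarrow> scenario \<Rightarrow> box \<Rightarrow> real \<Rightarrow> bool" where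
  "compatible S s B K \<longleftrightarrow> (\<forall>P\<in>S s. bell_value s B P \<le> K)"

definition stable_under_composition :: "scenario \<Rightarrow> box \<Rightarrow> real \<Rightarrow> bool" where
  "stable_under_composition s B K \<longleftrightarrow>
     (\<forall>S1 S2. closed_corr_set S1 \<and> closed_corr_set S2 \<and> compatible S1 s B K \<and> compatible S2 s B K
        \<longrightarrow> compatible (plus_corr S1 S2) s B K)"

end

theory Submission
  imports Defs "HOL-Analysis.Analysis"
begin


lemma plus_sub:
  assumes "closed_corr_set S2" "\<And>s. S1 s \<subseteq> S2 s"
  shows "plus_corr S1 S2 s \<subseteq> S2 s"
  unfolding plus_corr_def using assms by blast

lemma plus_sub':
  assumes "closed_corr_set S1" "\<And>s. S2 s \<subseteq> S1 s"
  shows "plus_corr S1 S2 s \<subseteq> S1 s"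
  unfolding plus_corr_def using assms by blast

lemma forward:
  assumes "valid_scenario s" "\<not> stable_under_composition s B K"
  shows "\<exists>S1 S2. closed_corr_set S1 \<and> closed_corr_set S2 \<and>
                  inter_corr S1 S2 \<noteq> S1 \<and> inter_corr S1 S2 \<noteq> S2"
proof -
  obtain S1 S2 where c: "closed_corr_set S1" "closed_corr_set S2" "compatible S1 s B K" "compatible S2 s B K"
    and nc: "\<not> compatible (plus_corr S1 S2) s B K"
    using assms(2) unfolding stable_under_composition_def by blast
  have "inter_corr S1 S2 \<noteq> S1"
  proof
    assume "inter_corr S1 S2 = S1"
    hence "\<And>s. S1 s \<subseteq> S2 s" unfolding inter_corr_def by (metis inf.cobounded2)
    hence "plus_corr S1 S2 s \<subseteq> S2 s" using plus_sub c by blast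
    thus False using nc c(4) unfolding compatible_def by blast
  qed
  moreover have "inter_corr S1 S2 \<noteq> S2"
  proof
    assume "inter_corr S1 S2 = S2"
    hence "\<And>s. S2 s \<subseteq> S1 s" unfolding inter_corr_def by (metis inf.cobounded1)
    hence "plus_corr S1 S2 s \<subseteq> S1 s" using plus_sub' c by blast
    thus False using nc c(3) unfolding compatible_def by blast
  qed
  ultimately show ?thesis using c by blast
qed


definition CS :: "scenario \<Rightarrow> (nat \<times> nat \<times> nat \<times> nat) set" where
  "CS s = {..<nA s} \<times> {..<nB s} \<times> {..<nX s} \<times> {..<nY s}"

lemma finite_CS[simp]: "finite (CS s)" unfolding CS_def by simp

lemma bv_alt: "bell_value s c R = (\<Sum>(a,b,x,y) \<in> CS s. c a b x y * R a b x y)"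
  unfolding bell_value_def CS_def by (simp add: sum.cartesian_product)

lemma closed_box: "closed_corr_set S \<Longrightarrow> P \<in> S s \<Longrightarrow> is_box s P"
  unfolding closed_corr_set_def no_signalling_def by blast

lemma box_le1: assumes "is_box s P" shows "P a b x y \<le> 1"
proof (cases "a < nA s \<and> b < nB s \<and> x < nX s \<and> y < nY s")
  case True
  have nn: "\<forall>a b x y. 0 \<le> P a b x y" using assms unfolding is_box_def by blast
  have "P a b x y \<le> (\<Sum>b'<nB s. P a b' x y)"
    by (rule member_le_sum) (use True nn in auto)
  also have "\<dots> \<le> (\<Sum>a'<nA s. \<Sum>b'<nB s. P a' b' x y)"
    by (rule member_le_sum[where f="\<lambda>a'. \<Sum>b'<nB s. P a' b' x y"]) (use True nn in \<open>auto intro: sum_nonneg\<close>)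
  also have "\<dots> = 1" using assms True unfolding is_box_def by blast
  finally show ?thesis .
next
  case False
  then show ?thesis using assms unfolding is_box_def by auto
qed

lemma box_ge0: "is_box s P \<Longrightarrow> 0 \<le> P a b x y" unfolding is_box_def by blast

lemma box_out: "is_box s P \<Longrightarrow> \<not> (a < nA s \<and> b < nB s \<and> x < nX s \<and> y < nY s) \<Longrightarrow> P a b x y = 0"
  unfolding is_box_def by blast

lemma subseq_fin:
  fixes f :: "nat \<Rightarrow> 'c \<Rightarrow> real"
  assumes "finite C" "\<And>k c. \<bar>f k c\<bar> \<le> 1"
  shows "\<exists>r. strict_mono r \<and> (\<forall>c\<in>C. convergent (\<lambda>k. f (r k) c))"
  using assms(1)
proof (induction C rule: finite_induct)
  case empty
  then show ?case by (rule exI[of _ id]) (simp add: strict_mono_def)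
next
  case (insert c C)
  then obtain r where r: "strict_mono r" "\<forall>c\<in>C. convergent (\<lambda>k. f (r k) c)" by blast
  have "bounded (range (\<lambda>k. f (r k) c))"
    unfolding bounded_iff using assms(2) by auto
  then obtain l r' where r': "strict_mono r'" "((\<lambda>k. f (r k) c) \<circ> r') \<longlonglongrightarrow> l"
    using bounded_imp_convergent_subsequence by blast
  have "strict_mono (r \<circ> r')" using r(1) r'(1) by (simp add: strict_mono_o)
  moreover have "\<forall>c'\<in>insert c C. convergent (\<lambda>k. f ((r \<circ> r') k) c')"
  proof
    fix c' assume "c' \<in> insert c C"
    then show "convergent (\<lambda>k. f ((r \<circ> r') k) c')"
    proof
      assume "c' = c" thus ?thesis using r'(2) by (auto simp: convergent_def o_def)
    next
      assume "c' \<in> C"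
      then obtain l' where "(\<lambda>k. f (r k) c') \<longlonglongrightarrow> l'" using r(2) by (auto simp: convergent_def)
      from LIMSEQ_subseq_LIMSEQ[OF this r'(1)] show ?thesis by (auto simp: convergent_def o_def)
    qed
  qed
  ultimately show ?case by blast
qed



lemma CS_mem: "(a,b,x,y) \<in> CS s \<longleftrightarrow> a < nA s \<and> b < nB s \<and> x < nX s \<and> y < nY s"
  unfolding CS_def by auto

lemma closed_convex:
  assumes "closed_corr_set S" "P \<in> S s" "Q \<in> S s" "0 \<le> c" "c \<le> 1"
  shows "(\<lambda>a b x y. c * P a b x y + (1 - c) * Q a b x y) \<in> S s"
  using assms unfolding closed_corr_set_def by blast

lemma sep:
  assumes cl: "closed_corr_set S" and P0: "is_box s P0" "P0 \<notin> S s"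
  shows "\<exists>c K. (\<forall>R\<in>S s. bell_value s c R \<le> K) \<and> K < bell_value s c P0"
proof (cases "S s = {}")
  case True
  then show ?thesis by (intro exI[of _ "\<lambda>a b x y. 0"] exI[of _ "-1"]) (simp add: bell_value_def)
next
  case False
  define D where "D R = (\<Sum>(a,b,x,y)\<in>CS s. (R a b x y - P0 a b x y)^2)" for R :: box
  define d where "d = Inf (D ` S s)"
  have bdd: "bdd_below (D ` S s)"
    by (rule bdd_belowI[of _ 0]) (auto simp: D_def intro!: sum_nonneg)
  have dle: "d \<le> D R" if "R \<in> S s" for R
    unfolding d_def using bdd that by (simp add: cInf_lower)
  have "\<forall>k. \<exists>R\<in>S s. D R < d + inverse (real (Suc k))"
  proof
    fix k
    have "Inf (D ` S s) < d + inverse (real (Suc k))" unfolding d_def by simp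
    then show "\<exists>R\<in>S s. D R < d + inverse (real (Suc k))"
      using cInf_less_iff[OF _ bdd] False by auto
  qed
  then obtain Rk where Rk: "\<And>k. Rk k \<in> S s" "\<And>k. D (Rk k) < d + inverse (real (Suc k))"
    by metis
  have boxk: "is_box s (Rk k)" for k using closed_box[OF cl Rk(1)] .
  have "\<exists>r. strict_mono r \<and> (\<forall>c\<in>CS s. convergent (\<lambda>k. (\<lambda>k (a,b,x,y). Rk k a b x y) (r k) c))"
    by (rule subseq_fin) (auto simp: abs_le_iff intro: box_le1[OF boxk] order_trans[OF _ box_ge0[OF boxk]])
  then obtain r where r: "strict_mono r" "\<forall>c\<in>CS s. convergent (\<lambda>k. (\<lambda>k (a,b,x,y). Rk k a b x y) (r k) c)"
    by blast
  define L where "L a b x y = lim (\<lambda>k. Rk (r k) a b x y)" for a b x y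
  have conv: "(\<lambda>k. Rk (r k) a b x y) \<longlonglongrightarrow> L a b x y" for a b x y
  proof -
    have "convergent (\<lambda>k. Rk (r k) a b x y)"
    proof (cases "(a,b,x,y) \<in> CS s")
      case True
      then show ?thesis using r(2) by fastforce
    next
      case False
      then have "(\<lambda>k. Rk (r k) a b x y) = (\<lambda>k. 0)"
        using box_out[OF boxk] by (auto simp: CS_mem)
      then show ?thesis by (simp add: convergent_const)
    qed
    then show ?thesis unfolding L_def by (simp add: convergent_LIMSEQ_iff)
  qed
  have LS: "L \<in> S s"
    using cl unfolding closed_corr_set_def
    apply (elim conjE)
    apply (erule allE[of _ s], erule allE[of _ "\<lambda>k. Rk (r k)"], erule allE[of _ L])
    using Rk(1) conv by blast
  have t1: "(\<lambda>k. D (Rk (r k))) \<longlonglongrightarrow> D L"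
    unfolding D_def by (auto intro!: tendsto_intros conv simp: split_beta)
  have t2: "(\<lambda>k. D (Rk (r k))) \<longlonglongrightarrow> d"
  proof (rule tendsto_sandwich[of "\<lambda>k. d" _ _ "\<lambda>k. d + inverse (real (Suc k))"])
    show "\<forall>\<^sub>F n in sequentially. d \<le> D (Rk (r n))" using dle Rk(1) by simp
    show "\<forall>\<^sub>F n in sequentially. D (Rk (r n)) \<le> d + inverse (real (Suc n))"
    proof (rule always_eventually, rule allI)
      fix n
      have "n \<le> r n" using r(1) by (simp add: seq_suble)
      hence "inverse (real (Suc (r n))) \<le> inverse (real (Suc n))"
        by (simp add: le_imp_inverse_le)
      thus "D (Rk (r n)) \<le> d + inverse (real (Suc n))" using Rk(2)[of "r n"] by linarith
    qed
    show "(\<lambda>k. d) \<longlonglongrightarrow> d" by simp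
    show "(\<lambda>k. d + inverse (real (Suc k))) \<longlonglongrightarrow> d" by (rule LIMSEQ_inverse_real_of_nat_add)
  qed
  have DL: "D L = d" using LIMSEQ_unique[OF t1 t2] .
  have Lbox: "is_box s L" using closed_box[OF cl LS] .
  have var: "0 \<le> (\<Sum>(a,b,x,y)\<in>CS s. (L a b x y - P0 a b x y) * (R a b x y - L a b x y))"
    if RS: "R \<in> S s" for R
  proof (rule ccontr)
    define A where "A = (\<Sum>(a,b,x,y)\<in>CS s. (L a b x y - P0 a b x y) * (R a b x y - L a b x y))"
    define E where "E = (\<Sum>(a,b,x,y)\<in>CS s. (R a b x y - L a b x y)^2)"
    assume "\<not> 0 \<le> (\<Sum>(a,b,x,y)\<in>CS s. (L a b x y - P0 a b x y) * (R a b x y - L a b x y))"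
    hence An: "A < 0" unfolding A_def by simp
    have E0: "0 \<le> E" unfolding E_def by (auto intro!: sum_nonneg)
    define t where "t = min 1 (- A / (E + 1))"
    have t0: "0 < t" "t \<le> 1" using An E0 unfolding t_def by (auto simp: divide_neg_pos)
    define M where "M a b x y = t * R a b x y + (1 - t) * L a b x y" for a b x y
    have MS: "M \<in> S s"
      unfolding M_def using closed_convex[OF cl RS LS] t0 by simp
    have "D M = D L + 2 * t * A + t^2 * E"
    proof -
      have "D M = (\<Sum>c\<in>CS s. (case c of (a,b,x,y) \<Rightarrow> (L a b x y - P0 a b x y)^2)
          + 2 * t * (case c of (a,b,x,y) \<Rightarrow> (L a b x y - P0 a b x y) * (R a b x y - L a b x y))
          + t^2 * (case c of (a,b,x,y) \<Rightarrow> (R a b x y - L a b x y)^2))"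
        unfolding D_def M_def
        by (rule sum.cong) (auto simp: power2_eq_square algebra_simps)
      also have "\<dots> = D L + 2 * t * A + t^2 * E"
        unfolding D_def A_def E_def by (simp add: sum.distrib sum_distrib_left)
      finally show ?thesis .
    qed
    moreover have "D L \<le> D M" using dle[OF MS] DL by simp
    ultimately have "0 \<le> 2 * t * A + t^2 * E" by simp
    hence "0 \<le> t * (2 * A + t * E)" by (simp add: power2_eq_square algebra_simps)
    hence h: "0 \<le> 2 * A + t * E" using t0 by (simp add: zero_le_mult_iff)
    have "t * E \<le> (- A / (E + 1)) * E" using E0 unfolding t_def by (intro mult_right_mono) auto
    also have "\<dots> \<le> - A" using An E0 by (simp add: field_simps)
    finally show False using h An by linarith
  qed
  have ne: "P0 \<noteq> L" using LS P0(2) by blast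
  then obtain a b x y where neq: "P0 a b x y \<noteq> L a b x y" by (meson ext)
  hence inCS: "(a,b,x,y) \<in> CS s"
    using neq box_out[OF P0(1), of a b x y] box_out[OF Lbox, of a b x y] unfolding CS_mem by metis
  define c where "c a b x y = P0 a b x y - L a b x y" for a b x y
  show ?thesis
  proof (intro exI[of _ c] exI[of _ "bell_value s c L"] conjI ballI)
    fix R assume RS: "R \<in> S s"
    have "bell_value s c R - bell_value s c L
        = - (\<Sum>(a,b,x,y)\<in>CS s. (L a b x y - P0 a b x y) * (R a b x y - L a b x y))"
      unfolding bv_alt c_def by (simp add: sum_subtractf[symmetric] sum_negf[symmetric] split_beta algebra_simps)
    thus "bell_value s c R \<le> bell_value s c L" using var[OF RS] by linarith
  next
    have "bell_value s c P0 - bell_value s c L = (\<Sum>(a,b,x,y)\<in>CS s. (P0 a b x y - L a b x y)^2)"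
      unfolding bv_alt c_def by (simp add: sum_subtractf[symmetric] split_beta power2_eq_square algebra_simps)
    also have "\<dots> > 0"
      by (rule sum_pos2[OF finite_CS inCS]) (use neq in auto)
    finally show "bell_value s c L < bell_value s c P0" by simp
  qed
qed



definition cg :: "nat \<Rightarrow> nat \<Rightarrow> nat" where "cg n a = (if a < n then a else 0)"

definition restr :: "scenario \<Rightarrow> scenario \<Rightarrow> nat \<Rightarrow> nat \<Rightarrow> box \<Rightarrow> box" where
 "restr s0 sc ox oy R = (\<lambda>a' b' x y. if a' < nA sc \<and> b' < nB sc \<and> x < nX sc \<and> y < nY sc then
    (\<Sum>a<nA s0. \<Sum>b<nB s0. if cg (nA sc) a = a' \<and> cg (nB sc) b = b' then R a b (x + ox) (y + oy) else 0) else 0)"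

definition wr1 :: "(nat \<Rightarrow> nat) \<Rightarrow> (nat \<Rightarrow> nat) \<Rightarrow> wiring" where
 "wr1 \<alpha> g = (\<lambda>x h. if h = [] then Query 0 (\<alpha> x) else Output (g (snd (snd (hd h)))))"

lemma sum_PiE1:
  "(\<Sum>oa\<in>PiE {..<Suc 0} A. G (oa 0)) = (\<Sum>a\<in>A 0. G a)"
proof (rule sum.reindex_bij_betw)
  show "bij_betw (\<lambda>oa. oa 0) (PiE {..<Suc 0} A) (A 0)"
  proof (rule bij_betwI')
    fix oa oa' assume o: "oa \<in> PiE {..<Suc 0} A" "oa' \<in> PiE {..<Suc 0} A"
    show "(oa 0 = oa' 0) = (oa = oa')"
    proof
      assume "oa 0 = oa' 0" then show "oa = oa'" by (intro PiE_ext[OF o]) auto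
    qed simp
  next
    fix oa assume "oa \<in> PiE {..<Suc 0} A" then show "oa 0 \<in> A 0" by auto
  next
    fix a assume "a \<in> A 0"
    then show "\<exists>oa\<in>PiE {..<Suc 0} A. a = oa 0"
      by (intro bexI[of _ "\<lambda>i. if i = 0 then a else undefined"]) (auto simp: PiE_def extensional_def)
  qed
qed

lemma sum_PiE1_2:
  "(\<Sum>oa\<in>PiE {..<Suc 0} A. \<Sum>ob\<in>PiE {..<Suc 0} B. G (oa 0) (ob 0)) = (\<Sum>a\<in>A 0. \<Sum>b\<in>B 0. G a b)"
proof -
  have i: "(\<Sum>ob\<in>PiE {..<Suc 0} B. G c (ob 0)) = (\<Sum>b\<in>B 0. G c b)" for c by (rule sum_PiE1)
  have "(\<Sum>oa\<in>PiE {..<Suc 0} A. \<Sum>ob\<in>PiE {..<Suc 0} B. G (oa 0) (ob 0))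
      = (\<Sum>oa\<in>PiE {..<Suc 0} A. \<Sum>b\<in>B 0. G (oa 0) b)" by (simp only: i)
  also have "\<dots> = (\<Sum>a\<in>A 0. \<Sum>b\<in>B 0. G a b)" by (rule sum_PiE1)
  finally show ?thesis .
qed

lemma sum_if_filter:
  assumes "finite A" "finite B"
  shows "(\<Sum>a\<in>A. \<Sum>b\<in>B. if P a \<and> Q b then F a b else (0::real))
       = (\<Sum>a\<in>{a\<in>A. P a}. \<Sum>b\<in>{b\<in>B. Q b}. F a b)"
proof -
  have "(\<Sum>a\<in>{a\<in>A. P a}. \<Sum>b\<in>{b\<in>B. Q b}. F a b)
      = (\<Sum>a\<in>A. if P a then (\<Sum>b\<in>{b\<in>B. Q b}. F a b) else 0)"
    using assms by (simp add: sum.inter_filter[OF assms(1)])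
  also have "\<dots> = (\<Sum>a\<in>A. \<Sum>b\<in>B. if P a \<and> Q b then F a b else 0)"
    using assms by (intro sum.cong refl) (simp add: sum.inter_filter[OF assms(2)] cong: if_cong)
  finally show ?thesis by (rule sym)
qed

lemma cg_lt: "0 < n \<Longrightarrow> cg n a < n" unfolding cg_def by auto

lemma wf_wr1:
  assumes "\<And>x. x < nin \<Longrightarrow> \<alpha> x < m" "\<And>r. r < k \<Longrightarrow> g r < nout"
  shows "wf_wiring (Suc 0) (\<lambda>i. m) (\<lambda>i. k) nin nout (wr1 \<alpha> g)"
  unfolding wf_wiring_def
proof (intro allI impI)
  fix x h assume x: "x < nin" and h: "valid_history (Suc 0) (\<lambda>i. m) (\<lambda>i. k) h"
  show "case wr1 \<alpha> g x h of Query i u \<Rightarrow> i < Suc 0 \<and> i \<notin> fst ` set h \<and> u < m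
        | Output r \<Rightarrow> r < nout"
  proof (cases "h = []")
    case True then show ?thesis using assms x by (simp add: wr1_def)
  next
    case False
    then have "hd h \<in> set h" by simp
    then have "snd (snd (hd h)) < k" using h unfolding valid_history_def by auto
    then show ?thesis using False assms by (simp add: wr1_def)
  qed
qed

lemma wr1_out: "wiring_output (wr1 \<alpha> g) (Suc 0) x oa = g (oa 0)"
  by (simp add: wiring_output_def wr1_def)

lemma wr1_in: "wiring_inputs (wr1 \<alpha> g) (Suc 0) x oa 0 = \<alpha> x"
  by (simp add: wiring_inputs_def wr1_def)

lemma compose1_eq:
  assumes "valid_scenario sc"
  shows "Defs.compose (Suc 0) (\<lambda>_. s0) (\<lambda>_. R) sc (wr1 (\<lambda>x. x + ox) (cg (nA sc))) (wr1 (\<lambda>y. y + oy) (cg (nB sc)))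
       = restr s0 sc ox oy R"
proof (intro ext)
  fix a' b' x y
  show "Defs.compose (Suc 0) (\<lambda>_. s0) (\<lambda>_. R) sc (wr1 (\<lambda>x. x + ox) (cg (nA sc))) (wr1 (\<lambda>y. y + oy) (cg (nB sc))) a' b' x y
       = restr s0 sc ox oy R a' b' x y"
  proof (cases "a' < nA sc \<and> b' < nB sc \<and> x < nX sc \<and> y < nY sc")
    case False then show ?thesis by (simp only: Defs.compose_def restr_def False if_False)
  next
    case True
    have "Defs.compose (Suc 0) (\<lambda>_. s0) (\<lambda>_. R) sc (wr1 (\<lambda>x. x + ox) (cg (nA sc))) (wr1 (\<lambda>y. y + oy) (cg (nB sc))) a' b' x y
      = (\<Sum>oa\<in>PiE {..<Suc 0} (\<lambda>i. {..<nA s0}). \<Sum>ob\<in>PiE {..<Suc 0} (\<lambda>i. {..<nB s0}).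
           if cg (nA sc) (oa 0) = a' \<and> cg (nB sc) (ob 0) = b' then R (oa 0) (ob 0) (x + ox) (y + oy) else 0)"
      using True by (simp add: Defs.compose_def wr1_out wr1_in prod.lessThan_Suc cong: if_cong)
    also have "\<dots> = (\<Sum>a\<in>{..<nA s0}. \<Sum>b\<in>{..<nB s0}.
           if cg (nA sc) a = a' \<and> cg (nB sc) b = b' then R a b (x + ox) (y + oy) else 0)"
      by (rule sum_PiE1_2)
    also have "\<dots> = restr s0 sc ox oy R a' b' x y"
      by (simp add: restr_def True)
    finally show ?thesis .
  qed
qed



lemma swap22:
  "(\<Sum>a\<in>A. \<Sum>b\<in>B. \<Sum>x\<in>X. \<Sum>y\<in>Y. f a b x y) = (\<Sum>x\<in>X. \<Sum>y\<in>Y. \<Sum>a\<in>A. \<Sum>b\<in>B. (f a b x y :: real))"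
proof -
  have "(\<Sum>a\<in>A. \<Sum>b\<in>B. \<Sum>x\<in>X. \<Sum>y\<in>Y. f a b x y) = (\<Sum>a\<in>A. \<Sum>x\<in>X. \<Sum>b\<in>B. \<Sum>y\<in>Y. f a b x y)"
    by (rule sum.cong[OF refl], rule sum.swap)
  also have "\<dots> = (\<Sum>x\<in>X. \<Sum>a\<in>A. \<Sum>b\<in>B. \<Sum>y\<in>Y. f a b x y)" by (rule sum.swap)
  also have "\<dots> = (\<Sum>x\<in>X. \<Sum>a\<in>A. \<Sum>y\<in>Y. \<Sum>b\<in>B. f a b x y)"
    by (rule sum.cong[OF refl], rule sum.cong[OF refl], rule sum.swap)
  also have "\<dots> = (\<Sum>x\<in>X. \<Sum>y\<in>Y. \<Sum>a\<in>A. \<Sum>b\<in>B. f a b x y)"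
    by (rule sum.cong[OF refl], rule sum.swap)
  finally show ?thesis .
qed

lemma sum_group2:
  assumes "finite A" "finite B" "finite A'" "finite B'" "\<And>a. a \<in> A \<Longrightarrow> g a \<in> A'" "\<And>b. b \<in> B \<Longrightarrow> h b \<in> B'"
  shows "(\<Sum>a'\<in>A'. \<Sum>b'\<in>B'. K a' b' * (\<Sum>a\<in>A. \<Sum>b\<in>B. if g a = a' \<and> h b = b' then F a b else 0))
       = (\<Sum>a\<in>A. \<Sum>b\<in>B. K (g a) (h b) * (F a b :: real))"
proof -
  have "(\<Sum>a'\<in>A'. \<Sum>b'\<in>B'. K a' b' * (\<Sum>a\<in>A. \<Sum>b\<in>B. if g a = a' \<and> h b = b' then F a b else 0))
      = (\<Sum>a'\<in>A'. \<Sum>b'\<in>B'. \<Sum>a\<in>A. \<Sum>b\<in>B. if g a = a' \<and> h b = b' then K a' b' * F a b else 0)"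
    by (simp add: sum_distrib_left if_distrib[of "\<lambda>z. K _ _ * z"] cong: if_cong)
  also have "\<dots> = (\<Sum>a'\<in>A'. \<Sum>a\<in>A. \<Sum>b\<in>B. \<Sum>b'\<in>B'. if g a = a' \<and> h b = b' then K a' b' * F a b else 0)"
  proof (rule sum.cong[OF refl])
    fix a'
    have "(\<Sum>b'\<in>B'. \<Sum>a\<in>A. \<Sum>b\<in>B. if g a = a' \<and> h b = b' then K a' b' * F a b else 0)
        = (\<Sum>a\<in>A. \<Sum>b'\<in>B'. \<Sum>b\<in>B. if g a = a' \<and> h b = b' then K a' b' * F a b else 0)"
      by (rule sum.swap)
    also have "\<dots> = (\<Sum>a\<in>A. \<Sum>b\<in>B. \<Sum>b'\<in>B'. if g a = a' \<and> h b = b' then K a' b' * F a b else 0)"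
      by (rule sum.cong[OF refl], rule sum.swap)
    finally show "(\<Sum>b'\<in>B'. \<Sum>a\<in>A. \<Sum>b\<in>B. if g a = a' \<and> h b = b' then K a' b' * F a b else 0)
        = (\<Sum>a\<in>A. \<Sum>b\<in>B. \<Sum>b'\<in>B'. if g a = a' \<and> h b = b' then K a' b' * F a b else 0)" .
  qed
  also have "\<dots> = (\<Sum>a'\<in>A'. \<Sum>a\<in>A. \<Sum>b\<in>B. if g a = a' then K a' (h b) * F a b else 0)"
  proof (intro sum.cong refl)
    fix a' a b assume "b \<in> B"
    then have hb: "h b \<in> B'" using assms(6) by blast
    have "(\<Sum>b'\<in>B'. if g a = a' \<and> h b = b' then K a' b' * F a b else 0)
        = (\<Sum>b'\<in>B'. if h b = b' then (if g a = a' then K a' b' * F a b else 0) else 0)"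
      by (rule sum.cong) auto
    also have "\<dots> = (if g a = a' then K a' (h b) * F a b else 0)"
      using assms(4) hb by simp
    finally show "(\<Sum>b'\<in>B'. if g a = a' \<and> h b = b' then K a' b' * F a b else 0)
        = (if g a = a' then K a' (h b) * F a b else 0)" .
  qed
  also have "\<dots> = (\<Sum>a\<in>A. \<Sum>b\<in>B. \<Sum>a'\<in>A'. if g a = a' then K a' (h b) * F a b else 0)"
    by (subst sum.swap) (rule sum.cong[OF refl], rule sum.swap)
  also have "\<dots> = (\<Sum>a\<in>A. \<Sum>b\<in>B. K (g a) (h b) * F a b)"
    using assms(3,5) by (intro sum.cong refl) simp
  finally show ?thesis .
qed

lemma sum_shift_if:
  fixes k n N :: nat
  assumes "k + n \<le> N"
  shows "(\<Sum>x<N. if k \<le> x \<and> x < k + n then f x else (0::real)) = (\<Sum>x<n. f (x + k))"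
proof -
  have "(\<Sum>x<N. if k \<le> x \<and> x < k + n then f x else 0) = (\<Sum>x\<in>{x\<in>{..<N}. k \<le> x \<and> x < k + n}. f x)"
    by (rule sum.inter_filter[symmetric]) simp
  also have "{x\<in>{..<N}. k \<le> x \<and> x < k + n} = {0 + k..<n + k}" using assms by auto
  also have "sum f {0 + k..<n + k} = (\<Sum>x\<in>{0..<n}. f (x + k))" by (rule sum.shift_bounds_nat_ivl)
  finally show ?thesis by (simp add: atLeast0LessThan)
qed

definition blockcoef :: "scenario \<Rightarrow> box \<Rightarrow> nat \<Rightarrow> nat \<Rightarrow> box" where
 "blockcoef sc c ox oy = (\<lambda>a b x y. if ox \<le> x \<and> x < ox + nX sc then (if oy \<le> y \<and> y < oy + nY sc then
      c (cg (nA sc) a) (cg (nB sc) b) (x - ox) (y - oy) else 0) else 0)"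

lemma value_split:
  assumes "ox + nX sc \<le> nX s0" "oy + nY sc \<le> nY s0" "0 < nA sc" "0 < nB sc"
  shows "bell_value s0 (blockcoef sc c ox oy) R = bell_value sc c (restr s0 sc ox oy R)"
proof -
  have L: "bell_value s0 (blockcoef sc c ox oy) R = (\<Sum>a<nA s0. \<Sum>b<nB s0. \<Sum>x<nX sc. \<Sum>y<nY sc.
       c (cg (nA sc) a) (cg (nB sc) b) x y * R a b (x + ox) (y + oy))"
    unfolding bell_value_def
  proof (rule sum.cong[OF refl], rule sum.cong[OF refl])
    fix a b
    have "(\<Sum>x<nX s0. \<Sum>y<nY s0. blockcoef sc c ox oy a b x y * R a b x y)
       = (\<Sum>x<nX s0. if ox \<le> x \<and> x < ox + nX sc then (\<Sum>y<nY s0. if oy \<le> y \<and> y < oy + nY sc then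
            c (cg (nA sc) a) (cg (nB sc) b) (x - ox) (y - oy) * R a b x y else 0) else 0)"
      by (intro sum.cong refl) (auto simp: blockcoef_def intro!: sum.cong)
    also have "\<dots> = (\<Sum>x<nX sc. \<Sum>y<nY s0. if oy \<le> y \<and> y < oy + nY sc then
            c (cg (nA sc) a) (cg (nB sc) b) x (y - oy) * R a b (x + ox) y else 0)"
      by (subst sum_shift_if[OF assms(1)]) (simp cong: if_cong)
    also have "\<dots> = (\<Sum>x<nX sc. \<Sum>y<nY sc. c (cg (nA sc) a) (cg (nB sc) b) x y * R a b (x + ox) (y + oy))"
      by (rule sum.cong[OF refl], subst sum_shift_if[OF assms(2)]) (simp cong: if_cong)
    finally show "(\<Sum>x<nX s0. \<Sum>y<nY s0. blockcoef sc c ox oy a b x y * R a b x y)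
       = (\<Sum>x<nX sc. \<Sum>y<nY sc. c (cg (nA sc) a) (cg (nB sc) b) x y * R a b (x + ox) (y + oy))" .
  qed
  have R: "bell_value sc c (restr s0 sc ox oy R) = (\<Sum>x<nX sc. \<Sum>y<nY sc. \<Sum>a<nA s0. \<Sum>b<nB s0.
       c (cg (nA sc) a) (cg (nB sc) b) x y * R a b (x + ox) (y + oy))"
  proof -
    have "bell_value sc c (restr s0 sc ox oy R) = (\<Sum>a'<nA sc. \<Sum>b'<nB sc. \<Sum>x<nX sc. \<Sum>y<nY sc.
        c a' b' x y * (\<Sum>a<nA s0. \<Sum>b<nB s0. if cg (nA sc) a = a' \<and> cg (nB sc) b = b' then R a b (x + ox) (y + oy) else 0))"
      unfolding bell_value_def restr_def by (intro sum.cong refl) simp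
    also have "\<dots> = (\<Sum>x<nX sc. \<Sum>y<nY sc. \<Sum>a'<nA sc. \<Sum>b'<nB sc.
        c a' b' x y * (\<Sum>a<nA s0. \<Sum>b<nB s0. if cg (nA sc) a = a' \<and> cg (nB sc) b = b' then R a b (x + ox) (y + oy) else 0))"
      by (rule swap22)
    also have "\<dots> = (\<Sum>x<nX sc. \<Sum>y<nY sc. \<Sum>a<nA s0. \<Sum>b<nB s0.
       c (cg (nA sc) a) (cg (nB sc) b) x y * R a b (x + ox) (y + oy))"
      by (rule sum.cong[OF refl], rule sum.cong[OF refl], rule sum_group2) (auto simp: cg_lt assms)
    finally show ?thesis .
  qed
  show ?thesis unfolding L R by (rule swap22)
qed



definition wr2 :: "nat \<Rightarrow> wiring" where
 "wr2 m = (\<lambda>x h. if h = [] then (if x < m then Query 0 x else Query (Suc 0) (x - m)) else Output (snd (snd (hd h))))"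

lemma wf_wr2:
  fixes m k nout :: nat
  assumes "inp 0 = m" "inp (Suc 0) = k" "outp 0 \<le> nout" "outp (Suc 0) \<le> nout"
  shows "wf_wiring (Suc (Suc 0)) inp outp (m + k) nout (wr2 m)"
  unfolding wf_wiring_def
proof (intro allI impI)
  fix x h assume x: "x < m + k" and h: "valid_history (Suc (Suc 0)) inp outp h"
  show "case wr2 m x h of Query i u \<Rightarrow> i < Suc (Suc 0) \<and> i \<notin> fst ` set h \<and> u < inp i
        | Output r \<Rightarrow> r < nout"
  proof (cases "h = []")
    case True then show ?thesis using assms x by (auto simp: wr2_def)
  next
    case False
    then have hh: "hd h \<in> set h" by simp
    obtain i u r where hd: "hd h = (i, u, r)" by (metis prod_cases3)
    have "i < Suc (Suc 0)" "r < outp i" using h hh hd unfolding valid_history_def by auto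
    then have "r < nout" using assms by (auto simp: less_Suc_eq)
    then show ?thesis using False hd by (simp add: wr2_def)
  qed
qed

lemma wr2_out: "wiring_output (wr2 m) (Suc (Suc 0)) x oa = (if x < m then oa 0 else oa (Suc 0))"
  by (simp add: wiring_output_def wr2_def)

lemma wr2_in: "wiring_inputs (wr2 m) (Suc (Suc 0)) x oa i =
    (if x < m then (if i = 0 then x else 0) else (if i = Suc 0 then x - m else 0))"
  by (simp add: wiring_inputs_def wr2_def)

lemma sum_PiE2:
  "(\<Sum>oa\<in>PiE {..<Suc (Suc 0)} A. G (oa 0) (oa (Suc 0))) = (\<Sum>a0\<in>A 0. \<Sum>a1\<in>A (Suc 0). (G a0 a1 :: real))"
proof -
  have "(\<Sum>oa\<in>PiE {..<Suc (Suc 0)} A. G (oa 0) (oa (Suc 0))) = (\<Sum>p\<in>A 0 \<times> A (Suc 0). G (fst p) (snd p))"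
  proof (rule sum.reindex_bij_betw[of "\<lambda>oa. (oa 0, oa (Suc 0))" _ _ "\<lambda>p. G (fst p) (snd p)", simplified])
    show "bij_betw (\<lambda>oa. (oa 0, oa (Suc 0))) (PiE {..<Suc (Suc 0)} A) (A 0 \<times> A (Suc 0))"
    proof (rule bij_betwI')
      fix oa oa' assume o: "oa \<in> PiE {..<Suc (Suc 0)} A" "oa' \<in> PiE {..<Suc (Suc 0)} A"
      show "((oa 0, oa (Suc 0)) = (oa' 0, oa' (Suc 0))) = (oa = oa')"
      proof
        assume "(oa 0, oa (Suc 0)) = (oa' 0, oa' (Suc 0))"
        then show "oa = oa'" by (intro PiE_ext[OF o]) (auto simp: less_Suc_eq)
      qed simp
    next
      fix oa assume "oa \<in> PiE {..<Suc (Suc 0)} A" then show "(oa 0, oa (Suc 0)) \<in> A 0 \<times> A (Suc 0)" by auto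
    next
      fix p assume p: "p \<in> A 0 \<times> A (Suc 0)"
      show "\<exists>oa\<in>PiE {..<Suc (Suc 0)} A. p = (oa 0, oa (Suc 0))"
        by (intro bexI[of _ "\<lambda>i. if i = 0 then fst p else if i = Suc 0 then snd p else undefined"])
           (use p in \<open>auto simp: PiE_def extensional_def less_Suc_eq\<close>)
    qed
  qed
  also have "\<dots> = (\<Sum>a0\<in>A 0. \<Sum>a1\<in>A (Suc 0). G a0 a1)"
    by (simp add: sum.cartesian_product split_def)
  finally show ?thesis .
qed

lemma sum_PiE2_2:
  "(\<Sum>oa\<in>PiE {..<Suc (Suc 0)} A. \<Sum>ob\<in>PiE {..<Suc (Suc 0)} B. G (oa 0) (oa (Suc 0)) (ob 0) (ob (Suc 0)))
   = (\<Sum>a0\<in>A 0. \<Sum>a1\<in>A (Suc 0). \<Sum>b0\<in>B 0. \<Sum>b1\<in>B (Suc 0). (G a0 a1 b0 b1 :: real))"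
proof -
  have i: "(\<Sum>ob\<in>PiE {..<Suc (Suc 0)} B. G c d (ob 0) (ob (Suc 0))) = (\<Sum>b0\<in>B 0. \<Sum>b1\<in>B (Suc 0). G c d b0 b1)"
    for c d by (rule sum_PiE2)
  show ?thesis by (simp only: i) (rule sum_PiE2)
qed

lemma sum4_sep:
  assumes "finite A0" "finite A1" "finite B0" "finite B1"
  shows "(\<Sum>a0\<in>A0. \<Sum>a1\<in>A1. \<Sum>b0\<in>B0. \<Sum>b1\<in>B1. if a0 = a' \<and> b0 = b' then F a0 b0 * G a1 b1 else 0)
       = (if a' \<in> A0 \<and> b' \<in> B0 then F a' b' else 0) * (\<Sum>a1\<in>A1. \<Sum>b1\<in>B1. (G a1 b1 :: real))"
proof -
  have "(\<Sum>a0\<in>A0. \<Sum>a1\<in>A1. \<Sum>b0\<in>B0. \<Sum>b1\<in>B1. if a0 = a' \<and> b0 = b' then F a0 b0 * G a1 b1 else 0)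
      = (\<Sum>a0\<in>A0. \<Sum>a1\<in>A1. if a0 = a' \<and> b' \<in> B0 then F a0 b' * (\<Sum>b1\<in>B1. G a1 b1) else 0)"
  proof (rule sum.cong[OF refl], rule sum.cong[OF refl])
    fix a0 a1
    have "(\<Sum>b0\<in>B0. \<Sum>b1\<in>B1. if a0 = a' \<and> b0 = b' then F a0 b0 * G a1 b1 else 0)
        = (\<Sum>b0\<in>B0. if b' = b0 then (if a0 = a' then F a0 b0 * (\<Sum>b1\<in>B1. G a1 b1) else 0) else 0)"
      by (rule sum.cong[OF refl]) (auto simp: sum_distrib_left)
    also have "\<dots> = (if a0 = a' \<and> b' \<in> B0 then F a0 b' * (\<Sum>b1\<in>B1. G a1 b1) else 0)"
      using assms(3) by simp
    finally show "(\<Sum>b0\<in>B0. \<Sum>b1\<in>B1. if a0 = a' \<and> b0 = b' then F a0 b0 * G a1 b1 else 0)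
        = (if a0 = a' \<and> b' \<in> B0 then F a0 b' * (\<Sum>b1\<in>B1. G a1 b1) else 0)" .
  qed
  also have "\<dots> = (\<Sum>a0\<in>A0. if a' = a0 then (if b' \<in> B0 then F a0 b' * (\<Sum>a1\<in>A1. \<Sum>b1\<in>B1. G a1 b1) else 0) else 0)"
    by (rule sum.cong[OF refl]) (auto simp: sum_distrib_left)
  also have "\<dots> = (if a' \<in> A0 \<and> b' \<in> B0 then F a' b' else 0) * (\<Sum>a1\<in>A1. \<Sum>b1\<in>B1. G a1 b1)"
    using assms(1) by simp
  finally show ?thesis .
qed



lemma sum4_sep2:
  assumes "finite A0" "finite A1" "finite B0" "finite B1"
  shows "(\<Sum>a0\<in>A0. \<Sum>a1\<in>A1. \<Sum>b0\<in>B0. \<Sum>b1\<in>B1. if a1 = a' \<and> b1 = b' then G a0 b0 * F a1 b1 else 0)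
       = (if a' \<in> A1 \<and> b' \<in> B1 then F a' b' else 0) * (\<Sum>a0\<in>A0. \<Sum>b0\<in>B0. (G a0 b0 :: real))"
proof -
  have "(\<Sum>a0\<in>A0. \<Sum>a1\<in>A1. \<Sum>b0\<in>B0. \<Sum>b1\<in>B1. if a1 = a' \<and> b1 = b' then G a0 b0 * F a1 b1 else 0)
      = (\<Sum>a1\<in>A1. \<Sum>a0\<in>A0. \<Sum>b0\<in>B0. \<Sum>b1\<in>B1. if a1 = a' \<and> b1 = b' then G a0 b0 * F a1 b1 else 0)"
    by (rule sum.swap)
  also have "\<dots> = (\<Sum>a1\<in>A1. \<Sum>a0\<in>A0. \<Sum>b1\<in>B1. \<Sum>b0\<in>B0. if a1 = a' \<and> b1 = b' then F a1 b1 * G a0 b0 else 0)"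
    by (rule sum.cong[OF refl], rule sum.cong[OF refl], subst sum.swap) (intro sum.cong refl, simp add: mult.commute)
  also have "\<dots> = (if a' \<in> A1 \<and> b' \<in> B1 then F a' b' else 0) * (\<Sum>a0\<in>A0. \<Sum>b0\<in>B0. G a0 b0)"
    by (rule sum4_sep[OF assms(2,1,4,3)])
  finally show ?thesis .
qed

definition tsc :: "scenario \<Rightarrow> scenario \<Rightarrow> scenario" where
  "tsc s1 s2 = Scen (nX s1 + nX s2) (nY s1 + nY s2) (max (nA s1) (nA s2)) (max (nB s1) (nB s2))"

definition ss2 :: "scenario \<Rightarrow> scenario \<Rightarrow> nat \<Rightarrow> scenario" where
  "ss2 s1 s2 = (\<lambda>i. if i = 0 then s1 else s2)"

definition Ps2 :: "box \<Rightarrow> box \<Rightarrow> nat \<Rightarrow> box" where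
  "Ps2 P Q = (\<lambda>i. if i = 0 then P else Q)"

definition comp2 :: "scenario \<Rightarrow> scenario \<Rightarrow> box \<Rightarrow> box \<Rightarrow> box" where
  "comp2 s1 s2 P Q = Defs.compose (Suc (Suc 0)) (ss2 s1 s2) (Ps2 P Q) (tsc s1 s2) (wr2 (nX s1)) (wr2 (nY s1))"

lemma box_sum1: "is_box s Q \<Longrightarrow> x < nX s \<Longrightarrow> y < nY s \<Longrightarrow> (\<Sum>a<nA s. \<Sum>b<nB s. Q a b x y) = 1"
  unfolding is_box_def by blast

lemma comp2_blk1:
  assumes P: "is_box s1 P" and Q: "is_box s2 Q" and r: "a' < nA (tsc s1 s2)" "b' < nB (tsc s1 s2)" "x < nX s1" "y < nY s1"
  shows "comp2 s1 s2 P Q a' b' x y = P a' b' x y"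
proof -
  have v2: "0 < nX s2" "0 < nY s2" using Q unfolding is_box_def valid_scenario_def by auto
  have "comp2 s1 s2 P Q a' b' x y = (\<Sum>oa\<in>PiE {..<Suc (Suc 0)} (\<lambda>i. {..<nA (ss2 s1 s2 i)}).
        \<Sum>ob\<in>PiE {..<Suc (Suc 0)} (\<lambda>i. {..<nB (ss2 s1 s2 i)}).
        if oa 0 = a' \<and> ob 0 = b' then P (oa 0) (ob 0) x y * Q (oa (Suc 0)) (ob (Suc 0)) 0 0 else 0)"
    using r unfolding comp2_def Defs.compose_def
    by (simp add: wr2_out wr2_in prod.lessThan_Suc Ps2_def tsc_def cong: if_cong)
  also have "\<dots> = (\<Sum>a0<nA s1. \<Sum>a1<nA s2. \<Sum>b0<nB s1. \<Sum>b1<nB s2.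
        if a0 = a' \<and> b0 = b' then P a0 b0 x y * Q a1 b1 0 0 else 0)"
    by (subst sum_PiE2_2) (simp add: ss2_def)
  also have "\<dots> = (if a' \<in> {..<nA s1} \<and> b' \<in> {..<nB s1} then P a' b' x y else 0) * (\<Sum>a1<nA s2. \<Sum>b1<nB s2. Q a1 b1 0 0)"
    by (rule sum4_sep) auto
  also have "\<dots> = P a' b' x y"
    using box_sum1[OF Q v2] box_out[OF P, of a' b' x y] r by auto
  finally show ?thesis .
qed

lemma comp2_blk2:
  assumes P: "is_box s1 P" and Q: "is_box s2 Q" and r: "a' < nA (tsc s1 s2)" "b' < nB (tsc s1 s2)"
    "nX s1 \<le> x" "x < nX s1 + nX s2" "nY s1 \<le> y" "y < nY s1 + nY s2"
  shows "comp2 s1 s2 P Q a' b' x y = Q a' b' (x - nX s1) (y - nY s1)"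
proof -
  have v1: "0 < nX s1" "0 < nY s1" using P unfolding is_box_def valid_scenario_def by auto
  have "comp2 s1 s2 P Q a' b' x y = (\<Sum>oa\<in>PiE {..<Suc (Suc 0)} (\<lambda>i. {..<nA (ss2 s1 s2 i)}).
        \<Sum>ob\<in>PiE {..<Suc (Suc 0)} (\<lambda>i. {..<nB (ss2 s1 s2 i)}).
        if oa (Suc 0) = a' \<and> ob (Suc 0) = b' then P (oa 0) (ob 0) 0 0 * Q (oa (Suc 0)) (ob (Suc 0)) (x - nX s1) (y - nY s1) else 0)"
    using r unfolding comp2_def Defs.compose_def
    by (simp add: wr2_out wr2_in prod.lessThan_Suc Ps2_def tsc_def cong: if_cong)
  also have "\<dots> = (\<Sum>a0<nA s1. \<Sum>a1<nA s2. \<Sum>b0<nB s1. \<Sum>b1<nB s2.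
        if a1 = a' \<and> b1 = b' then P a0 b0 0 0 * Q a1 b1 (x - nX s1) (y - nY s1) else 0)"
    by (subst sum_PiE2_2) (simp add: ss2_def)
  also have "\<dots> = (if a' \<in> {..<nA s2} \<and> b' \<in> {..<nB s2} then Q a' b' (x - nX s1) (y - nY s1) else 0) * (\<Sum>a0<nA s1. \<Sum>b0<nB s1. P a0 b0 0 0)"
    by (rule sum4_sep2) auto
  also have "\<dots> = Q a' b' (x - nX s1) (y - nY s1)"
    using box_sum1[OF P v1] box_out[OF Q, of a' b' "x - nX s1" "y - nY s1"] r by auto
  finally show ?thesis .
qed



lemma closed_compose:
  assumes "closed_corr_set S" "valid_scenario t" "\<forall>i<n. Ps i \<in> S (ss i)"
    "wf_wiring n (\<lambda>i. nX (ss i)) (\<lambda>i. nA (ss i)) (nX t) (nA t) WA"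
    "wf_wiring n (\<lambda>i. nY (ss i)) (\<lambda>i. nB (ss i)) (nY t) (nB t) WB"
  shows "Defs.compose n ss Ps t WA WB \<in> S t"
  using assms unfolding closed_corr_set_def by blast

lemma restr_mem:
  assumes cl: "closed_corr_set S" and R: "R \<in> S s0" and v: "valid_scenario sc"
    and o: "ox + nX sc \<le> nX s0" "oy + nY sc \<le> nY s0"
  shows "restr s0 sc ox oy R \<in> S sc"
proof -
  have vv: "0 < nA sc" "0 < nB sc" using v unfolding valid_scenario_def by auto
  have "Defs.compose (Suc 0) (\<lambda>_. s0) (\<lambda>_. R) sc (wr1 (\<lambda>x. x + ox) (cg (nA sc))) (wr1 (\<lambda>y. y + oy) (cg (nB sc))) \<in> S sc"
    by (rule closed_compose[OF cl v])
       (use R o vv in \<open>auto intro!: wf_wr1 cg_lt\<close>)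
  then show ?thesis using compose1_eq[OF v] by simp
qed

lemma bv_cong:
  assumes "\<And>a b x y. a < nA s \<Longrightarrow> b < nB s \<Longrightarrow> x < nX s \<Longrightarrow> y < nY s \<Longrightarrow> R a b x y = R' a b x y"
  shows "bell_value s c R = bell_value s c R'"
  unfolding bell_value_def using assms by (intro sum.cong refl) auto

lemma bv_bound:
  assumes "closed_corr_set S"
  shows "bdd_above (bell_value s c ` S s)"
proof (rule bdd_aboveI2)
  fix R assume R: "R \<in> S s"
  have box: "is_box s R" using closed_box[OF assms R] .
  show "bell_value s c R \<le> (\<Sum>(a,b,x,y)\<in>CS s. \<bar>c a b x y\<bar>)"
    unfolding bv_alt
  proof (rule sum_mono)
    fix p assume "p \<in> CS s"
    obtain a b x y where p: "p = (a,b,x,y)" by (metis prod_cases4)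
    have "c a b x y * R a b x y \<le> \<bar>c a b x y\<bar> * R a b x y"
      using box_ge0[OF box] by (intro mult_right_mono) auto
    also have "\<dots> \<le> \<bar>c a b x y\<bar>"
      using box_le1[OF box] by (simp add: mult_left_le)
    finally show "(case p of (a,b,x,y) \<Rightarrow> c a b x y * R a b x y) \<le> (case p of (a,b,x,y) \<Rightarrow> \<bar>c a b x y\<bar>)"
      using p by simp
  qed
qed

lemma restr_comp_blk1:
  assumes P: "is_box s1 P" and Q: "is_box s2 Q"
  shows "bell_value s1 c (restr (tsc s1 s2) s1 0 0 (comp2 s1 s2 P Q)) = bell_value s1 c P"
proof (rule bv_cong)
  fix a' b' x y assume r: "a' < nA s1" "b' < nB s1" "x < nX s1" "y < nY s1"
  have "restr (tsc s1 s2) s1 0 0 (comp2 s1 s2 P Q) a' b' x y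
      = (\<Sum>a<nA (tsc s1 s2). \<Sum>b<nB (tsc s1 s2). if cg (nA s1) a = a' \<and> cg (nB s1) b = b' then P a b x y else 0)"
    unfolding restr_def using r by (auto intro!: sum.cong simp: comp2_blk1[OF P Q])
  also have "\<dots> = (\<Sum>a<nA (tsc s1 s2). if a' = a then (\<Sum>b<nB (tsc s1 s2). if b' = b then P a b x y else 0) else 0)"
  proof (rule sum.cong[OF refl])
    fix a
    have e: "(if cg (nA s1) a = a' \<and> cg (nB s1) b = b' then P a b x y else 0) = (if a' = a then (if b' = b then P a b x y else 0) else 0)" for b
      using box_out[OF P, of a b x y] r by (auto simp: cg_def)
    show "(\<Sum>b<nB (tsc s1 s2). if cg (nA s1) a = a' \<and> cg (nB s1) b = b' then P a b x y else 0) = (if a' = a then (\<Sum>b<nB (tsc s1 s2). if b' = b then P a b x y else 0) else 0)"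
      unfolding e by simp
  qed
  also have "\<dots> = P a' b' x y" using r by (simp add: tsc_def less_max_iff_disj)
  finally show "restr (tsc s1 s2) s1 0 0 (comp2 s1 s2 P Q) a' b' x y = P a' b' x y" .
qed

lemma restr_comp_blk2:
  assumes P: "is_box s1 P" and Q: "is_box s2 Q"
  shows "bell_value s2 c (restr (tsc s1 s2) s2 (nX s1) (nY s1) (comp2 s1 s2 P Q)) = bell_value s2 c Q"
proof (rule bv_cong)
  fix a' b' x y assume r: "a' < nA s2" "b' < nB s2" "x < nX s2" "y < nY s2"
  have "restr (tsc s1 s2) s2 (nX s1) (nY s1) (comp2 s1 s2 P Q) a' b' x y
      = (\<Sum>a<nA (tsc s1 s2). \<Sum>b<nB (tsc s1 s2). if cg (nA s2) a = a' \<and> cg (nB s2) b = b' then Q a b x y else 0)"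
    unfolding restr_def using r by (auto intro!: sum.cong simp: comp2_blk2[OF P Q])
  also have "\<dots> = (\<Sum>a<nA (tsc s1 s2). if a' = a then (\<Sum>b<nB (tsc s1 s2). if b' = b then Q a b x y else 0) else 0)"
  proof (rule sum.cong[OF refl])
    fix a
    have e: "(if cg (nA s2) a = a' \<and> cg (nB s2) b = b' then Q a b x y else 0) = (if a' = a then (if b' = b then Q a b x y else 0) else 0)" for b
      using box_out[OF Q, of a b x y] r by (auto simp: cg_def)
    show "(\<Sum>b<nB (tsc s1 s2). if cg (nA s2) a = a' \<and> cg (nB s2) b = b' then Q a b x y else 0) = (if a' = a then (\<Sum>b<nB (tsc s1 s2). if b' = b then Q a b x y else 0) else 0)"
      unfolding e by simp
  qed
  also have "\<dots> = Q a' b' x y" using r by (simp add: tsc_def less_max_iff_disj)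
  finally show "restr (tsc s1 s2) s2 (nX s1) (nY s1) (comp2 s1 s2 P Q) a' b' x y = Q a' b' x y" .
qed



lemma backward:
  assumes c1: "closed_corr_set S1" and c2: "closed_corr_set S2"
    and n1: "inter_corr S1 S2 \<noteq> S1" and n2: "inter_corr S1 S2 \<noteq> S2"
  shows "\<exists>s B K. valid_scenario s \<and> \<not> stable_under_composition s B K"
proof -
  obtain s1 P0 where P0: "P0 \<in> S1 s1" "P0 \<notin> S2 s1"
  proof -
    have "\<not> (\<forall>s. S1 s \<subseteq> S2 s)"
    proof
      assume "\<forall>s. S1 s \<subseteq> S2 s"
      hence "inter_corr S1 S2 = S1" unfolding inter_corr_def by (auto intro!: ext)
      thus False using n1 by simp
    qed
    thus ?thesis using that by blast
  qed
  obtain s2 Q0 where Q0: "Q0 \<in> S2 s2" "Q0 \<notin> S1 s2"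
  proof -
    have "\<not> (\<forall>s. S2 s \<subseteq> S1 s)"
    proof
      assume "\<forall>s. S2 s \<subseteq> S1 s"
      hence "inter_corr S1 S2 = S2" unfolding inter_corr_def by (auto intro!: ext)
      thus False using n2 by simp
    qed
    thus ?thesis using that by blast
  qed
  have P0b: "is_box s1 P0" using closed_box[OF c1 P0(1)] .
  have Q0b: "is_box s2 Q0" using closed_box[OF c2 Q0(1)] .
  have v1: "valid_scenario s1" using P0b unfolding is_box_def by blast
  have v2: "valid_scenario s2" using Q0b unfolding is_box_def by blast
  obtain c1 K1 where sep1: "\<forall>R\<in>S2 s1. bell_value s1 c1 R \<le> K1" "K1 < bell_value s1 c1 P0"
    using sep[OF c2 P0b P0(2)] by blast
  obtain c2 K2 where sep2: "\<forall>R\<in>S1 s2. bell_value s2 c2 R \<le> K2" "K2 < bell_value s2 c2 Q0"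
    using sep[OF c1 Q0b Q0(2)] by blast
  define m1 where "m1 = Sup (bell_value s1 c1 ` S1 s1)"
  define m2 where "m2 = Sup (bell_value s2 c2 ` S2 s2)"
  have le1: "bell_value s1 c1 R \<le> m1" if "R \<in> S1 s1" for R
    unfolding m1_def using bv_bound[OF c1] that by (intro cSup_upper) auto
  have le2: "bell_value s2 c2 R \<le> m2" if "R \<in> S2 s2" for R
    unfolding m2_def using bv_bound[OF c2] that by (intro cSup_upper) auto
  have mK1: "K1 < m1" using le1[OF P0(1)] sep1(2) by linarith
  have mK2: "K2 < m2" using le2[OF Q0(1)] sep2(2) by linarith
  obtain P where P: "P \<in> S1 s1" "(3 * m1 + K1) / 4 < bell_value s1 c1 P"
  proof -
    have "(3 * m1 + K1) / 4 < m1" using mK1 by (simp add: field_simps)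
    hence "(3 * m1 + K1) / 4 < Sup (bell_value s1 c1 ` S1 s1)" unfolding m1_def .
    then show ?thesis using that less_cSup_iff[OF _ bv_bound[OF c1]] P0(1) by blast
  qed
  obtain Q where Q: "Q \<in> S2 s2" "(3 * m2 + K2) / 4 < bell_value s2 c2 Q"
  proof -
    have "(3 * m2 + K2) / 4 < m2" using mK2 by (simp add: field_simps)
    hence "(3 * m2 + K2) / 4 < Sup (bell_value s2 c2 ` S2 s2)" unfolding m2_def .
    then show ?thesis using that less_cSup_iff[OF _ bv_bound[OF c2]] Q0(1) by blast
  qed
  have Pb: "is_box s1 P" using closed_box[OF c1 P(1)] .
  have Qb: "is_box s2 Q" using closed_box[OF c2 Q(1)] .
  define t where "t = tsc s1 s2"
  have vt: "valid_scenario t" using v1 v2 unfolding t_def tsc_def valid_scenario_def by auto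
  define w1 where "w1 = 1 / (m1 - K1)"
  define w2 where "w2 = 1 / (m2 - K2)"
  have w1: "0 < w1" "w1 * (m1 - K1) = 1" using mK1 unfolding w1_def by auto
  have w2: "0 < w2" "w2 * (m2 - K2) = 1" using mK2 unfolding w2_def by auto
  define B where "B a b x y = w1 * blockcoef s1 c1 0 0 a b x y + w2 * blockcoef s2 c2 (nX s1) (nY s1) a b x y" for a b x y
  define K where "K = 1 + w1 * K1 + w2 * K2"
  have vs1: "0 < nA s1" "0 < nB s1" using v1 unfolding valid_scenario_def by auto
  have vs2: "0 < nA s2" "0 < nB s2" using v2 unfolding valid_scenario_def by auto
  have bvB: "bell_value t B R = w1 * bell_value s1 c1 (restr t s1 0 0 R) + w2 * bell_value s2 c2 (restr t s2 (nX s1) (nY s1) R)" for R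
  proof -
    have "bell_value t B R = w1 * bell_value t (blockcoef s1 c1 0 0) R + w2 * bell_value t (blockcoef s2 c2 (nX s1) (nY s1)) R"
      unfolding bell_value_def B_def by (simp add: sum_distrib_left sum.distrib algebra_simps)
    also have "\<dots> = w1 * bell_value s1 c1 (restr t s1 0 0 R) + w2 * bell_value s2 c2 (restr t s2 (nX s1) (nY s1) R)"
      using vs1 vs2 by (simp add: value_split t_def tsc_def)
    finally show ?thesis .
  qed
  have o1: "0 + nX s1 \<le> nX t" "0 + nY s1 \<le> nY t" by (auto simp: t_def tsc_def)
  have o2: "nX s1 + nX s2 \<le> nX t" "nY s1 + nY s2 \<le> nY t" by (auto simp: t_def tsc_def)
  have compat1: "compatible S1 t B K"
    unfolding compatible_def
  proof
    fix R assume R: "R \<in> S1 t"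
    have "bell_value s1 c1 (restr t s1 0 0 R) \<le> m1" by (rule le1, rule restr_mem[OF c1 R v1 o1])
    moreover have "bell_value s2 c2 (restr t s2 (nX s1) (nY s1) R) \<le> K2"
      using sep2(1) restr_mem[OF c1 R v2 o2] by blast
    ultimately have "bell_value t B R \<le> w1 * m1 + w2 * K2"
      unfolding bvB using w1 w2 by (intro add_mono mult_left_mono) auto
    also have "\<dots> = K" unfolding K_def using w1(2) by (simp add: algebra_simps)
    finally show "bell_value t B R \<le> K" .
  qed
  have compat2: "compatible S2 t B K"
    unfolding compatible_def
  proof
    fix R assume R: "R \<in> S2 t"
    have "bell_value s1 c1 (restr t s1 0 0 R) \<le> K1"
      using sep1(1) restr_mem[OF c2 R v1 o1] by blast
    moreover have "bell_value s2 c2 (restr t s2 (nX s1) (nY s1) R) \<le> m2"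
      by (rule le2, rule restr_mem[OF c2 R v2 o2])
    ultimately have "bell_value t B R \<le> w1 * K1 + w2 * m2"
      unfolding bvB using w1 w2 by (intro add_mono mult_left_mono) auto
    also have "\<dots> = K" unfolding K_def using w2(2) by (simp add: algebra_simps)
    finally show "bell_value t B R \<le> K" .
  qed
  define X where "X = comp2 s1 s2 P Q"
  have Xin: "X \<in> plus_corr S1 S2 t"
    unfolding plus_corr_def
  proof (intro InterI, elim CollectE exE conjE)
    fix U T assume U: "U = T t" and cT: "closed_corr_set T" and sub: "\<forall>s'. S1 s' \<union> S2 s' \<subseteq> T s'"
    have "Defs.compose (Suc (Suc 0)) (ss2 s1 s2) (Ps2 P Q) t (wr2 (nX s1)) (wr2 (nY s1)) \<in> T t"
    proof (rule closed_compose[OF cT vt])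
      show "\<forall>i<Suc (Suc 0). Ps2 P Q i \<in> T (ss2 s1 s2 i)"
        using sub P(1) Q(1) by (auto simp: Ps2_def ss2_def less_Suc_eq)
      show "wf_wiring (Suc (Suc 0)) (\<lambda>i. nX (ss2 s1 s2 i)) (\<lambda>i. nA (ss2 s1 s2 i)) (nX t) (nA t) (wr2 (nX s1))"
        unfolding t_def tsc_def scenario.sel by (rule wf_wr2) (auto simp: ss2_def)
      show "wf_wiring (Suc (Suc 0)) (\<lambda>i. nY (ss2 s1 s2 i)) (\<lambda>i. nB (ss2 s1 s2 i)) (nY t) (nB t) (wr2 (nY s1))"
        unfolding t_def tsc_def scenario.sel by (rule wf_wr2) (auto simp: ss2_def)
    qed
    then show "X \<in> U" unfolding U X_def comp2_def t_def .
  qed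
  have "bell_value t B X = w1 * bell_value s1 c1 P + w2 * bell_value s2 c2 Q"
    unfolding bvB unfolding X_def t_def restr_comp_blk1[OF Pb Qb] restr_comp_blk2[OF Pb Qb] ..
  also have "\<dots> > w1 * ((3 * m1 + K1) / 4) + w2 * ((3 * m2 + K2) / 4)"
    using w1 w2 P(2) Q(2) by (intro add_strict_mono mult_strict_left_mono) auto
  also have "w1 * ((3 * m1 + K1) / 4) + w2 * ((3 * m2 + K2) / 4) = K + 1/2"
  proof -
    have "w1 * ((3 * m1 + K1) / 4) = w1 * K1 + 3/4 * (w1 * (m1 - K1))" by (simp add: field_simps)
    moreover have "w2 * ((3 * m2 + K2) / 4) = w2 * K2 + 3/4 * (w2 * (m2 - K2))" by (simp add: field_simps)
    ultimately show ?thesis using w1(2) w2(2) unfolding K_def by (simp add: field_simps)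
  qed
  finally have "K < bell_value t B X" by simp
  hence "\<not> compatible (plus_corr S1 S2) t B K" using Xin unfolding compatible_def by force
  hence "\<not> stable_under_composition t B K"
    unfolding stable_under_composition_def using c1 c2 compat1 compat2 by blast
  thus ?thesis using vt by blast
qed


theorem theorem1:
  shows "(\<exists>s B K. valid_scenario s \<and> \<not> stable_under_composition s B K) \<longleftrightarrow>
         (\<exists>S1 S2. closed_corr_set S1 \<and> closed_corr_set S2 \<and>
                  inter_corr S1 S2 \<noteq> S1 \<and> inter_corr S1 S2 \<noteq> S2)"
  using forward backward by blast

end
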